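(* For every integer $k\ge1$ and every prime power $q$, $P(k,\mathbb{F}_q)=O(k,\mathbb{F}_q)$.
   Context: A sequence $(a_n)_{n\ge0}$ over $\mathbb{F}_q$ satisfies a linear recurrence of degree $k$ if there are $c_0,\dots,c_{k-1}\in\mathbb{F}_q$, with $c_0\neq0$ (standing assumption), such that $a_{n+k}=\sum_{i=0}^{k-1}c_ia_{n+i}$ for all $n\ge0$; such sequences are purely periodic and $\rho(\mathbf{a})$ is the least $m>0$ with $a_{n+m}=a_n$ for all $n\ge0$. $P(k,\mathbb{F}_q)$ is the set of all $\rho(\mathbf{a})$ for sequences $\mathbf{a}$ satisfying some linear recurrence of degree $k$ over $\mathbb{F}_q$. For nonzero $f(x)\in\mathbb{F}_q[x]$, write $f=x^rg$ with $r\ge0$, $\gcd(g,x)=1$, and let $\mathrm{ord}(f)$ be the least $n>0$ with $g\mid x^n-1$. $O(k,\mathbb{F}_q)=\{\mathrm{ord}(f): f\in\mathbb{F}_q[x],\ \deg f=k\}$. *)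

theory Defs
  imports "HOL-Computational_Algebra.Computational_Algebra"
begin

definition lin_rec :: "nat \<Rightarrow> (nat \<Rightarrow> 'a::field) \<Rightarrow> bool" where
  "lin_rec k a \<longleftrightarrow> (\<exists>c :: nat \<Rightarrow> 'a. c 0 \<noteq> 0 \<and>
      (\<forall>n. a (n + k) = (\<Sum>i<k. c i * a (n + i))))"

definition seq_period :: "(nat \<Rightarrow> 'a) \<Rightarrow> nat" where
  "seq_period a = (LEAST m. 0 < m \<and> (\<forall>n. a (n + m) = a n))"

definition P_set :: "nat \<Rightarrow> 'a::field itself \<Rightarrow> nat set" where
  "P_set k _ = {seq_period a | a :: nat \<Rightarrow> 'a. lin_rec k a}"

definition poly_ord :: "'a::field poly \<Rightarrow> nat" where
  "poly_ord f = (LEAST n. 0 < n \<and> (\<exists>r g. f = [:0, 1:] ^ r * g \<and> coprime g [:0, 1:]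
      \<and> g dvd [:0, 1:] ^ n - 1))"

definition O_set :: "nat \<Rightarrow> 'a::field itself \<Rightarrow> nat set" where
  "O_set k _ = {poly_ord f | f :: 'a poly. f \<noteq> 0 \<and> degree f = k}"

end

theory Submission
  imports Defs
begin


definition act :: "'a::field poly \<Rightarrow> (nat \<Rightarrow> 'a) \<Rightarrow> nat \<Rightarrow> 'a" where
  "act p a n = (\<Sum>i\<le>degree p. coeff p i * a (n + i))"

lemma act_bound: "degree p \<le> N \<Longrightarrow> act p a n = (\<Sum>i\<le>N. coeff p i * a (n + i))"
proof -
  assume N: "degree p \<le> N"
  have "(\<Sum>i\<le>N. coeff p i * a (n + i)) = (\<Sum>i\<le>degree p. coeff p i * a (n + i))"
    by (rule sum.mono_neutral_right) (auto simp: coeff_eq_0 intro: le_trans[OF _ N])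
  thus ?thesis by (simp add: act_def)
qed

lemma act_add: "act (p + q) a n = act p a n + act q a n"
proof -
  let ?N = "max (degree p) (degree q)"
  have "degree (p+q) \<le> ?N" by (rule degree_add_le_max)
  then show ?thesis
    by (simp add: act_bound[of _ ?N] distrib_right sum.distrib)
qed

lemma act_smult: "act (smult c p) a n = c * act p a n"
  by (simp add: act_bound[OF degree_smult_le] sum_distrib_left mult.assoc act_def)

lemma act_pCons: "act (pCons c p) a n = c * a n + act p a (Suc n)"
proof -
  have "degree (pCons c p) \<le> Suc (degree p)" by (simp add: degree_pCons_le)
  then have "act (pCons c p) a n = (\<Sum>i\<le>Suc (degree p). coeff (pCons c p) i * a (n + i))"
    by (rule act_bound)
  also have "\<dots> = c * a n + (\<Sum>i\<le>degree p. coeff p i * a (Suc n + i))"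
    by (subst sum.atMost_Suc_shift) simp
  finally show ?thesis by (simp add: act_def)
qed

lemma act_0: "act 0 a n = 0" by (simp add: act_def)
lemma act_zero_seq: "act p (\<lambda>_. 0) n = 0" by (simp add: act_def)

lemma act_mult: "act (p * q) a n = act p (act q a) n"
proof (induction p arbitrary: n)
  case 0 then show ?case by (simp add: act_0)
next
  case (pCons c p)
  have "pCons c p * q = smult c q + pCons 0 (p * q)" by simp
  then show ?case using pCons by (simp add: act_add act_smult act_pCons)
qed

lemma act_1: "act 1 a n = a n" by (simp add: act_def)

lemma act_monom: "act (monom c m) a n = c * a (n + m)"
proof -
  have "act (monom c m) a n = (\<Sum>i\<le>m. (if m = i then c else 0) * a (n + i))"
    by (simp add: act_bound[of _ m] degree_monom_le coeff_monom)
  also have "\<dots> = (\<Sum>i\<le>m. (if m = i then c * a (n + i) else 0))" by (rule sum.cong) auto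
  also have "\<dots> = c * a (n + m)" by (simp add: sum.delta)
  finally show ?thesis .
qed

lemma act_diff: "act (p - q) a n = act p a n - act q a n"
  using act_add[of "p - q" q a n] by simp

lemma X_pow: "[:0,1::'a::comm_ring_1:] ^ m = monom 1 m"
  by (simp add: monom_altdef)

lemma act_period: "act ([:0,1:] ^ m - 1) a n = a (n + m) - a n"
  by (simp add: X_pow act_diff act_monom act_1)

lemma act_dvd: "f dvd p \<Longrightarrow> (\<forall>n. act f a n = 0) \<Longrightarrow> act p a n = 0"
proof -
  assume "f dvd p" and h: "\<forall>n. act f a n = 0"
  then obtain k where "p = f * k" by (elim dvdE)
  then have "act p a n = act k (act f a) n" by (simp add: act_mult[of k f, symmetric] mult.commute)
  also have "act f a = (\<lambda>_. 0)" using h by auto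
  finally show ?thesis by (simp add: act_zero_seq)
qed



lemma X_prime: "prime_elem [:0,1::'a::field:]"
  by (rule prime_elem_linear_field_poly) simp

lemma X_dvd_iff: "[:0,1::'a::field:] dvd p \<longleftrightarrow> poly p 0 = 0"
  using dvd_iff_poly_eq_0[of 0 p] by simp

lemma coprime_X_iff: "coprime p [:0,1::'a::field:] \<longleftrightarrow> poly p 0 \<noteq> 0"
proof
  assume c: "coprime p [:0,1::'a:]"
  show "poly p 0 \<noteq> 0"
  proof
    assume "poly p 0 = 0"
    then have "[:0,1:] dvd p" by (simp only: X_dvd_iff)
    then have "is_unit [:0,1::'a:]" using c coprime_common_divisor[of p "[:0,1::'a:]" "[:0,1:]"] by simp
    then show False using prime_elem_not_unit[OF X_prime] by blast
  qed
next
  assume "poly p 0 \<noteq> 0"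
  then have "\<not> [:0,1::'a:] dvd p" by (simp add: X_dvd_iff)
  then have "coprime [:0,1::'a:] p"
  proof (intro coprimeI)
    fix d assume nd: "\<not> [:0,1::'a:] dvd p" and d: "d dvd [:0,1::'a:]" "d dvd p"
    show "is_unit d"
    proof (rule ccontr)
      assume "\<not> is_unit d"
      with X_prime d(1) have "[:0,1:] dvd d" by (rule prime_elemD2)
      then have "[:0,1:] dvd p" using d(2) by (rule dvd_trans)
      with nd show False by contradiction
    qed
  qed
  then show "coprime p [:0,1::'a:]" by (simp only: coprime_commute)
qed

lemma X_cancel1:
  fixes g h :: "'a::field poly"
  assumes g0: "poly g 0 \<noteq> 0" and d: "g dvd [:0,1:] * h"
  shows "g dvd h"
proof -
  obtain q where q: "[:0,1:] * h = g * q" using d by (elim dvdE)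
  have "poly g 0 * poly q 0 = 0" using arg_cong[OF q, of "\<lambda>p. poly p 0"] by simp
  then have "poly q 0 = 0" using g0 by simp
  then have "[:0,1:] dvd q" by (simp only: X_dvd_iff)
  then obtain q' where q': "q = [:0,1:] * q'" by (elim dvdE)
  have "[:0,1::'a:] * h = [:0,1:] * (g * q')" using q q' by (simp add: ac_simps)
  moreover have "[:0,1::'a:] \<noteq> 0" by simp
  ultimately have "h = g * q'" by simp
  then show ?thesis by simp
qed

lemma X_cancel:
  fixes g h :: "'a::field poly"
  assumes g0: "poly g 0 \<noteq> 0"
  shows "g dvd [:0,1:] ^ r * h \<Longrightarrow> g dvd h"
proof (induction r)
  case 0 then show ?case by simp
next
  case (Suc r)
  then have "g dvd [:0,1:] * ([:0,1:] ^ r * h)" by (simp add: ac_simps)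
  then have "g dvd [:0,1:] ^ r * h" by (rule X_cancel1[OF g0])
  then show ?case by (rule Suc.IH)
qed

lemma finite_deg_le: "finite {p :: 'a::{zero,finite} poly. degree p \<le> N}"
proof -
  have "{p :: 'a poly. degree p \<le> N} \<subseteq> Poly ` {xs. set xs \<subseteq> UNIV \<and> length xs \<le> Suc N}"
  proof
    fix p :: "'a poly" assume "p \<in> {p. degree p \<le> N}"
    then have "length (coeffs p) \<le> Suc N"
    proof (cases "p = 0")
      case True then show ?thesis by simp
    next
      case False then show ?thesis using \<open>p \<in> _\<close> by (simp add: length_coeffs)
    qed
    then have "coeffs p \<in> {xs. set xs \<subseteq> UNIV \<and> length xs \<le> Suc N}" by simp
    moreover have "p = Poly (coeffs p)" by simp
    ultimately show "p \<in> Poly ` {xs. set xs \<subseteq> UNIV \<and> length xs \<le> Suc N}"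
      by (rule rev_image_eqI)
  qed
  moreover have "finite {xs :: 'a list. set xs \<subseteq> UNIV \<and> length xs \<le> Suc N}"
    by (rule finite_lists_length_le) simp
  ultimately show ?thesis using finite_subset finite_imageI by blast
qed

lemma exists_ord:
  fixes g :: "'a::{field,finite} poly"
  assumes g0: "g \<noteq> 0" and cop: "poly g 0 \<noteq> 0"
  shows "\<exists>n>0. g dvd [:0,1:] ^ n - 1"
proof -
  define h where "h = (\<lambda>n::nat. [:0,1::'a:] ^ n mod g)"
  have "range h \<subseteq> {p. degree p \<le> degree g}"
  proof
    fix p assume "p \<in> range h"
    then obtain n where p: "p = [:0,1::'a:] ^ n mod g" unfolding h_def by blast
    show "p \<in> {p. degree p \<le> degree g}"
    proof (cases "p = 0")
      case True then show ?thesis by simp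
    next
      case False then show ?thesis using degree_mod_less'[OF g0, of "[:0,1::'a:] ^ n"] p by simp
    qed
  qed
  then have "finite (range h)" using finite_deg_le by (rule finite_subset)
  then have "\<not> inj h" using finite_imageD[of h UNIV] infinite_UNIV_nat by blast
  then obtain i0 j0 where ij0: "h i0 = h j0" "i0 \<noteq> j0" unfolding inj_def by blast
  define i where "i = min i0 j0"
  define j where "j = max i0 j0"
  have ij: "h j = h i" "i < j" using ij0 unfolding i_def j_def by (auto simp: min_def max_def)
  have "g dvd [:0,1:] ^ j - [:0,1:] ^ i"
    using mod_eq_dvd_iff[THEN iffD1, OF ij(1)[unfolded h_def]] .
  also have "[:0,1:] ^ j - [:0,1:] ^ i = [:0,1::'a:] ^ i * ([:0,1:] ^ (j - i) - 1)"
  proof -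
    have "j = i + (j - i)" using ij(2) by simp
    then have "[:0,1::'a:] ^ j = [:0,1:] ^ i * [:0,1:] ^ (j - i)" by (metis power_add)
    then show ?thesis by (simp add: right_diff_distrib)
  qed
  finally have d: "g dvd [:0,1::'a:] ^ i * ([:0,1:] ^ (j - i) - 1)" .
  have "g dvd [:0,1:] ^ (j - i) - 1" using X_cancel[OF cop d] .
  moreover have "j - i > 0" using ij(2) by simp
  ultimately show ?thesis by (intro exI conjI)
qed



lemma act_sum: "act (\<Sum>i\<in>A. p i) a n = (\<Sum>i\<in>A. act (p i) a n)"
proof (induction A rule: infinite_finite_induct)
  case (infinite A) then show ?case by (simp add: act_0)
next
  case empty then show ?case by (simp add: act_0)
next
  case (insert x F) then show ?case by (simp add: act_add)
qed

lemma rec_to_poly: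
  fixes a :: "nat \<Rightarrow> 'a::field"
  assumes "lin_rec k a" "k \<ge> 1"
  shows "\<exists>f. f \<noteq> 0 \<and> degree f = k \<and> poly f 0 \<noteq> 0 \<and> (\<forall>n. act f a n = 0)"
proof -
  obtain c where c0: "c 0 \<noteq> 0" and rec: "\<And>n. a (n + k) = (\<Sum>i<k. c i * a (n + i))"
    using assms(1) unfolding lin_rec_def by blast
  define f where "f = monom 1 k - (\<Sum>i<k. monom (c i) i)"
  have cf: "coeff f j = (if j = k then 1 else if j < k then - c j else 0)" for j
  proof -
    have "coeff (\<Sum>i<k. monom (c i) i) j = (\<Sum>i<k. if i = j then c i else 0)"
      by (simp add: coeff_sum coeff_monom)
    also have "\<dots> = (if j < k then c j else 0)" by (simp add: sum.delta')
    finally show ?thesis unfolding f_def by (auto simp: coeff_monom)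
  qed
  have fk: "coeff f k = 1" using cf by simp
  then have f0: "f \<noteq> 0" by auto
  have "degree f \<le> k" by (rule degree_le) (auto simp: cf)
  moreover have "k \<le> degree f" using fk by (intro le_degree) simp
  ultimately have dk: "degree f = k" by simp
  have "poly f 0 = - c 0" using cf[of 0] assms(2) by (simp add: poly_0_coeff_0)
  then have p0: "poly f 0 \<noteq> 0" using c0 by simp
  have "act f a n = 0" for n
    unfolding f_def by (simp add: act_diff act_sum act_monom rec[of n])
  then show ?thesis using f0 dk p0 by blast
qed

lemma poly_to_rec:
  fixes a :: "nat \<Rightarrow> 'a::field"
  assumes "degree f = k" "coeff f k = 1" "poly f 0 \<noteq> 0" "\<And>n. act f a n = 0"
  shows "lin_rec k a"
  unfolding lin_rec_def
proof (intro exI[of _ "\<lambda>i. - coeff f i"] conjI allI)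
  show "- coeff f 0 \<noteq> 0" using assms(3) by (simp add: poly_0_coeff_0)
  fix n
  have "0 = act f a n" using assms(4) by simp
  also have "\<dots> = (\<Sum>i<k. coeff f i * a (n + i)) + a (n + k)"
    unfolding act_def assms(1) using assms(2) by (simp add: lessThan_Suc_atMost[symmetric])
  finally show "a (n + k) = (\<Sum>i<k. - coeff f i * a (n + i))"
    by (simp add: sum_negf eq_neg_iff_add_eq_0 add.commute)
qed

lemma min_ann:
  fixes a :: "nat \<Rightarrow> 'a::field"
  assumes "f \<noteq> 0" "\<And>n. act f a n = 0"
  shows "\<exists>g. g \<noteq> 0 \<and> (\<forall>n. act g a n = 0) \<and> (\<forall>p. (\<forall>n. act p a n = 0) \<longrightarrow> g dvd p)"
proof -
  define S where "S = {p. p \<noteq> 0 \<and> (\<forall>n. act p a n = 0)}"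
  have "\<exists>p\<in>S. degree p = degree f" using assms unfolding S_def by blast
  then have "\<exists>p\<in>S. degree p = (LEAST d. \<exists>p\<in>S. degree p = d)"
    by (rule LeastI[of "\<lambda>d. \<exists>p\<in>S. degree p = d"])
  then obtain g where gS: "g \<in> S" and dg: "degree g = (LEAST d. \<exists>p\<in>S. degree p = d)" by blast
  have "g dvd p" if p: "\<forall>n. act p a n = 0" for p
  proof -
    define r where "r = p mod g"
    have "p = g * (p div g) + r" unfolding r_def by simp
    then have "r = p - g * (p div g)" by (simp add: algebra_simps)
    then have "act r a n = 0" for n
      using p gS act_dvd[of g "g * (p div g)" a n] unfolding S_def by (simp add: act_diff)
    moreover have "r = 0"
    proof (rule ccontr)
      assume r0: "r \<noteq> 0"
      have "degree r < degree g" using degree_mod_less'[of g p] r0 gS unfolding r_def S_def by simp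
      moreover have "r \<in> S" using r0 \<open>\<And>n. act r a n = 0\<close> unfolding S_def by blast
      then have "(LEAST d. \<exists>p\<in>S. degree p = d) \<le> degree r" by (intro Least_le) blast
      ultimately show False using dg by simp
    qed
    ultimately show ?thesis unfolding r_def by (simp add: mod_0_imp_dvd)
  qed
  then show ?thesis using gS unfolding S_def by blast
qed



lemma mod_sum_poly: "(\<Sum>i\<in>A. p i) mod (g :: 'a::field poly) = (\<Sum>i\<in>A. p i mod g)"
proof (induction A rule: infinite_finite_induct)
  case (insert x F) then show ?case by (simp add: poly_mod_add_left)
qed simp_all

definition bseq :: "'a::field poly \<Rightarrow> nat \<Rightarrow> 'a" where
  "bseq g n = coeff (monom 1 n mod g) (degree g - 1)"

lemma act_bseq: "act p (bseq g) n = coeff ((monom 1 n * p) mod g) (degree g - 1)"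
proof -
  have "monom 1 n * p = monom 1 n * (\<Sum>i\<le>degree p. monom (coeff p i) i)"
    by (simp add: poly_as_sum_of_monoms)
  also have "\<dots> = (\<Sum>i\<le>degree p. smult (coeff p i) (monom 1 (n + i)))"
    by (simp add: sum_distrib_left mult_monom smult_monom)
  finally have "(monom 1 n * p) mod g = (\<Sum>i\<le>degree p. smult (coeff p i) (monom 1 (n + i) mod g))"
    by (simp add: mod_sum_poly mod_smult_left)
  then show ?thesis by (simp add: act_def bseq_def coeff_sum)
qed

lemma ann_bseq:
  fixes g :: "'a::field poly"
  assumes g0: "g \<noteq> 0"
  shows "(\<forall>n. act p (bseq g) n = 0) \<longleftrightarrow> g dvd p"
proof
  assume "g dvd p"
  then show "\<forall>n. act p (bseq g) n = 0"
    by (auto simp: act_bseq elim!: dvdE)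
next
  assume A: "\<forall>n. act p (bseq g) n = 0"
  define h where "h = p mod g"
  show "g dvd p"
  proof (rule ccontr)
    assume "\<not> g dvd p"
    then have h0: "h \<noteq> 0" unfolding h_def by (simp add: dvd_eq_mod_eq_0)
    have dh: "degree h < degree g" using degree_mod_less'[OF g0] h0 unfolding h_def by simp
    define j where "j = degree g - 1 - degree h"
    have deg: "degree (monom 1 j * h) = degree g - 1"
      using h0 dh unfolding j_def by (simp add: degree_mult_eq degree_monom_eq)
    then have "(monom 1 j * h) mod g = monom 1 j * h"
      using dh by (intro mod_poly_less) simp
    moreover have "(monom 1 j * p) mod g = (monom 1 j * h) mod g"
      unfolding h_def by (simp add: mod_mult_right_eq)
    ultimately have "act p (bseq g) j = coeff (monom 1 j * h) (degree g - 1)"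
      by (simp add: act_bseq)
    also have "\<dots> = lead_coeff h" using dh unfolding j_def by (simp add: coeff_monom_mult)
    also have "\<dots> \<noteq> 0" using h0 by simp
    finally show False using A by simp
  qed
qed



abbreviation "XX \<equiv> [:0, 1:]"

lemma periodic_iff: "(\<forall>n. a (n + m) = a n) \<longleftrightarrow> (\<forall>n. act (XX ^ m - 1) a n = 0)"
  by (simp add: act_period)

lemma P_sub_O:
  fixes a :: "nat \<Rightarrow> 'a::{field,finite}"
  assumes rec: "lin_rec k a" and k1: "k \<ge> 1"
  shows "seq_period a \<in> O_set k TYPE('a)"
proof -
  obtain f where f0: "f \<noteq> 0" and df: "degree f = k" and pf: "poly f 0 \<noteq> 0"
    and af: "\<And>n. act f a n = 0" using rec_to_poly[OF rec k1] by blast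
  obtain g where g0: "g \<noteq> 0" and ag: "\<forall>n. act g a n = 0"
    and gmin: "\<And>p. (\<forall>n. act p a n = 0) \<Longrightarrow> g dvd p"
    using min_ann[of f a, OF f0 af] by blast
  have gf: "g dvd f" using gmin af by blast
  then obtain q where fq: "f = g * q" by (elim dvdE)
  have pg: "poly g 0 \<noteq> 0" using pf fq by auto
  have dg: "degree g \<le> k" using dvd_imp_degree_le[OF gf f0] df by simp
  have per: "(\<forall>n. a (n + m) = a n) \<longleftrightarrow> g dvd XX ^ m - 1" for m
    unfolding periodic_iff using gmin act_dvd ag by blast
  obtain m where m: "m > 0" "g dvd XX ^ m - 1" using exists_ord[OF g0 pg] by blast
  define e where "e = seq_period a"
  have ex: "\<exists>m. 0 < m \<and> (\<forall>n. a (n + m) = a n)" using m per by blast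
  have e: "0 < e \<and> (\<forall>n. a (n + e) = a n)"
    unfolding e_def seq_period_def by (rule LeastI_ex[OF ex])
  have emin: "e \<le> y" if "0 < y \<and> (\<forall>n. a (n + y) = a n)" for y
    unfolding e_def seq_period_def by (rule Least_le) (rule that)
  define F where "F = XX ^ (k - degree g) * g"
  have F0: "F \<noteq> 0" using g0 unfolding F_def by simp
  have dF: "degree F = k" using g0 dg unfolding F_def
    by (simp add: degree_mult_eq degree_linear_power[of 0, simplified])
  have "poly_ord F = e"
    unfolding poly_ord_def
  proof (rule Least_equality)
    show "0 < e \<and> (\<exists>r g'. F = XX ^ r * g' \<and> coprime g' XX \<and> g' dvd XX ^ e - 1)"
      using e per[of e] pg unfolding F_def by (auto simp: coprime_X_iff)
  next
    fix y assume "0 < y \<and> (\<exists>r g'. F = XX ^ r * g' \<and> coprime g' XX \<and> g' dvd XX ^ y - 1)"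
    then obtain r g' where y: "0 < y" "F = XX ^ r * g'" "g' dvd XX ^ y - 1" by blast
    have "g dvd XX ^ r * g'" using y(2) unfolding F_def by (metis dvd_triv_right)
    then have "g dvd g'" by (rule X_cancel[OF pg])
    then have "g dvd XX ^ y - 1" using y(3) by (rule dvd_trans)
    then show "e \<le> y" using emin per y(1) by blast
  qed
  then have "seq_period a = poly_ord F \<and> F \<noteq> 0 \<and> degree F = k" using F0 dF e_def by simp
  then show ?thesis unfolding O_set_def by (intro CollectI exI[of _ F])
qed

lemma O_sub_P:
  fixes f :: "'a::{field,finite} poly"
  assumes f0: "f \<noteq> 0" and df: "degree f = k"
  shows "poly_ord f \<in> P_set k TYPE('a)"
proof -
  obtain q where fq: "f = XX ^ order 0 f * q" and nq: "\<not> XX dvd q"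
    using order_decomp[OF f0, of 0] by auto
  have q0: "q \<noteq> 0" using nq by auto
  have pq: "poly q 0 \<noteq> 0" using nq X_dvd_iff by blast
  obtain m where m: "m > 0" "q dvd XX ^ m - 1" using exists_ord[OF q0 pq] by blast
  define Q where "Q = (\<lambda>n. 0 < n \<and> (\<exists>r g. f = XX ^ r * g \<and> coprime g XX \<and> g dvd XX ^ n - 1))"
  have ex: "\<exists>n. Q n" unfolding Q_def using m fq pq coprime_X_iff by blast
  define e where "e = poly_ord f"
  have eQ: "Q e" unfolding e_def poly_ord_def Q_def[symmetric] by (rule LeastI_ex[OF ex])
  have emin: "e \<le> y" if "Q y" for y
    unfolding e_def poly_ord_def Q_def[symmetric] by (rule Least_le) (rule that)
  from eQ obtain r g where e0: "0 < e" and fg: "f = XX ^ r * g" and cg: "coprime g XX"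
    and ge: "g dvd XX ^ e - 1" unfolding Q_def by blast
  have g0: "g \<noteq> 0" using f0 fg by auto
  have pg: "poly g 0 \<noteq> 0" using cg coprime_X_iff by blast
  define b where "b = bseq g"
  have per: "(\<forall>n. b (n + y) = b n) \<longleftrightarrow> g dvd XX ^ y - 1" for y
    unfolding periodic_iff b_def using ann_bseq[OF g0] by blast
  have "seq_period b = e"
    unfolding seq_period_def
  proof (rule Least_equality)
    show "0 < e \<and> (\<forall>n. b (n + e) = b n)" using e0 ge per by blast
  next
    fix y assume "0 < y \<and> (\<forall>n. b (n + y) = b n)"
    then have "Q y" unfolding Q_def using per fg cg by blast
    then show "e \<le> y" by (rule emin)
  qed
  moreover have "lin_rec k b"
  proof -
    define F where "F = g * smult (inverse (lead_coeff g)) ([:-1,1:] ^ r)"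
    have lg: "lead_coeff g \<noteq> 0" using g0 by simp
    have dk: "degree g + r = k" using df fg g0
      by (simp add: degree_mult_eq degree_linear_power[of 0, simplified])
    have dF: "degree F = k" unfolding F_def using g0 lg dk
      by (simp add: degree_mult_eq degree_linear_power)
    have "lead_coeff F = 1" unfolding F_def using lg
      by (simp add: lead_coeff_mult lead_coeff_power)
    then have cF: "coeff F k = 1" using dF by simp
    have "poly F 0 \<noteq> 0" unfolding F_def using pg lg by simp
    moreover have "g dvd F" unfolding F_def by (rule dvd_triv_left)
    then have "\<And>n. act F b n = 0" using ann_bseq[OF g0, of F] unfolding b_def by blast
    ultimately show ?thesis using poly_to_rec[OF dF cF] by blast
  qed
  ultimately show ?thesis unfolding P_set_def e_def
    by (intro CollectI exI[of _ b]) simp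
qed


theorem lemma3p2:
  fixes k :: nat
  assumes "k \<ge> 1"
  shows "P_set k TYPE('a::{field,finite}) = O_set k TYPE('a)"
proof
  show "P_set k TYPE('a) \<subseteq> O_set k TYPE('a)"
    using P_sub_O[OF _ assms] unfolding P_set_def by blast
  show "O_set k TYPE('a) \<subseteq> P_set k TYPE('a)"
    using O_sub_P unfolding O_set_def by blast
qed

end
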